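(* Let $\mathcal{A}=(A,B,s,t,\Delta)$ be a left multiplier bialgebroid and $B_0\subseteq B$ a two-sided ideal with $s(B_0)A=A=t(B_0)A$; let $s_0,t_0$ be the restrictions of $s,t$ to $B_0$. Then the natural map ${}_{B_0}A\otimes A^{B_0}\to{}_BA\otimes A^B$ is an isomorphism. Let $\Delta_0$ be the composition of $\Delta$ with the induced isomorphism $A\bar\times_BA\to A\bar\times_{B_0}A$. Then $\mathcal{A}_0=(A,B_0,s_0,t_0,\Delta_0)$ is a left multiplier bialgebroid, and every left counit for $\mathcal{A}$ takes values in $B_0$ and is a left counit for $\mathcal{A}_0$.
   Context: All algebras are associative complex algebras, not necessarily unital. For an algebra $A$ with $A_A$ non-degenerate, $L(A)$ denotes right $A$-module endomorphisms of $A$ (containing $A$ via left multiplication) and $M(A)=\{T\in L(A):aT\in A\ \forall a\}$. For an algebra $D$ with a homomorphism $s\colon D\to M(A)$ and anti-homomorphism $t\colon D\to M(A)$, ${}_DA\otimes A^D$ denotes the quotient of $A\otimes A$ by the span of $s(x)a\otimes b-a\otimes t(x)b$ ($x\in D$), and $A\bar\times_DA$ the algebra of linear endomorphisms $T$ of ${}_DA\otimes A^D$ such that for all $a,b\in A$ there are $T(a\otimes1),T(1\otimes b)\in{}_DA\otimes A^D$ with $T(a\otimes b)=T(a\otimes1)(1\otimes b)=T(1\otimes b)(a\otimes1)$. A left multiplier bialgebroid is a tuple $(A,B,s,t,\Delta)$: (i) $A,B$ algebras, $A_A$ non-degenerate and idempotent; (ii) $s\colon B\to M(A)$ homomorphism,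 $t\colon B\to M(A)$ anti-homomorphism with commuting images, $s,t$ injective, $s(B)A=A=t(B)A$; ${}_BA\otimes A^B$ is non-degenerate as a right module over $A\otimes1$ and over $1\otimes A$; (iii) $\Delta\colon A\to A\bar\times_BA$ is an algebra homomorphism; (iv) $\Delta(s(x)t(y)as(x')t(y'))=(t(y)\otimes s(x))\Delta(a)(t(y')\otimes s(x'))$; (v) if $\Delta(b)(1\otimes c)=\sum p_i\otimes q_i$ and $\Delta(b)(a\otimes1)=\sum u_j\otimes v_j$ then $\sum\Delta(p_i)(a\otimes1)\otimes q_i=\sum u_j\otimes\Delta(v_j)(1\otimes c)$ in $A^{\otimes3}$ modulo the span of $s(x)a\otimes b\otimes c-a\otimes t(x)b\otimes c$ and $a\otimes s(x)b\otimes c-a\otimes b\otimes t(x)c$. Canonical maps $T_\lambda(a\otimes b)=\Delta(b)(a\otimes1)$, $T_\rho(a\otimes b)=\Delta(a)(1\otimes b)$. A left counit is a linear $\varepsilon\colon A\to B$ with $\varepsilon(s(x)a)=x\varepsilon(a)$, $\varepsilon(t(y)a)=\varepsilon(a)y$, $\sum t(\varepsilon(c_i))d_i=ab$ whenever $T_\rho(a\otimes b)=\sum c_i\otimes d_i$, and $\sum s(\varepsilon(d_i))c_i=ba$ whenever $T_\lambda(a\otimes b)=\sum c_i\otimes d_i$. *)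

theory Defs
  imports Complex_Main
begin

definition calg :: "(complex \<Rightarrow> 'a::ring \<Rightarrow> 'a) \<Rightarrow> bool" where
  "calg sc \<longleftrightarrow> vector_space sc \<and>
     (\<forall>c x y. sc c (x * y) = sc c x * y \<and> sc c (x * y) = x * sc c y)"

definition subalg :: "(complex \<Rightarrow> 'b::ring \<Rightarrow> 'b) \<Rightarrow> 'b set \<Rightarrow> bool" where
  "subalg sc D \<longleftrightarrow> 0 \<in> D \<and> (\<forall>x\<in>D. \<forall>y\<in>D. x + y \<in> D \<and> x * y \<in> D) \<and>
     (\<forall>x\<in>D. \<forall>c. sc c x \<in> D)"

definition two_sided_ideal :: "(complex \<Rightarrow> 'b::ring \<Rightarrow> 'b) \<Rightarrow> 'b set \<Rightarrow> bool" where
  "two_sided_ideal sc I \<longleftrightarrow> 0 \<in> I \<and> (\<forall>x\<in>I. \<forall>y\<in>I. x + y \<in> I) \<and>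
     (\<forall>x\<in>I. \<forall>c. sc c x \<in> I) \<and> (\<forall>x\<in>I. \<forall>y. x * y \<in> I \<and> y * x \<in> I)"

definition right_nondeg :: "'a::ring itself \<Rightarrow> bool" where
  "right_nondeg _ \<longleftrightarrow> (\<forall>a::'a. (\<forall>b. a * b = 0) \<longrightarrow> a = 0)"

definition idempotent_alg :: "'a::ring itself \<Rightarrow> bool" where
  "idempotent_alg _ \<longleftrightarrow> (\<forall>a::'a. \<exists>l. a = sum_list (map (\<lambda>(x, y). x * y) l))"

text \<open>L(A): right A-module endomorphisms of A (products in L(A) are composition; A sits in
  L(A) via left multiplication).\<close>
definition inL :: "(complex \<Rightarrow> 'a::ring \<Rightarrow> 'a) \<Rightarrow> ('a \<Rightarrow> 'a) \<Rightarrow> bool" where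
  "inL sc T \<longleftrightarrow> (\<forall>x y. T (x + y) = T x + T y) \<and> (\<forall>c x. T (sc c x) = sc c (T x)) \<and>
     (\<forall>a b. T (a * b) = T a * b)"

text \<open>M(A) = {T in L(A) : a T in A for all a}, where a T is the composite of left
  multiplication by a with T.\<close>
definition inM :: "(complex \<Rightarrow> 'a::ring \<Rightarrow> 'a) \<Rightarrow> ('a \<Rightarrow> 'a) \<Rightarrow> bool" where
  "inM sc T \<longleftrightarrow> inL sc T \<and> (\<forall>a. \<exists>c. \<forall>b. a * T b = c * b)"

definition rmul :: "'a::ring \<Rightarrow> ('a \<Rightarrow> 'a) \<Rightarrow> 'a" where
  "rmul a T = (THE c. \<forall>b. c * b = a * T b)"

text \<open>f(D) A = A: every element of A is a finite sum of elements f x b with x in D.\<close>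
definition gen_by :: "'b set \<Rightarrow> ('b \<Rightarrow> 'a \<Rightarrow> 'a::ring) \<Rightarrow> bool" where
  "gen_by D f \<longleftrightarrow> (\<forall>a. \<exists>l. (\<forall>x\<in>fst ` set l. x \<in> D) \<and> a = sum_list (map (\<lambda>(x, b). f x b) l))"

text \<open>Elements of A (x) A (resp. A (x) A (x) A) are represented by finite formal sums, i.e.
  lists of pairs (triples) of elements of A; scalars are absorbed in the first factor.
  fv maps a list to the corresponding element of the free complex vector space on A x A.\<close>
definition fv :: "'k list \<Rightarrow> 'k \<Rightarrow> complex" where
  "fv xs = (\<lambda>k. of_nat (count_list xs k))"

definition cspan :: "('k \<Rightarrow> complex) set \<Rightarrow> ('k \<Rightarrow> complex) set" where
  "cspan S = {f. \<exists>l. (\<forall>g\<in>snd ` set l. g \<in> S) \<and> f = (\<lambda>k. sum_list (map (\<lambda>(c, g). c * g k) l))}"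

text \<open>Relations defining _D A (x) A^D: bilinearity relations (giving A (x) A) together with
  s(x)a (x) b - a (x) t(x)b for x in D.\<close>
definition rel2 :: "(complex \<Rightarrow> 'a::ring \<Rightarrow> 'a) \<Rightarrow> 'b set \<Rightarrow> ('b \<Rightarrow> 'a \<Rightarrow> 'a) \<Rightarrow> ('b \<Rightarrow> 'a \<Rightarrow> 'a)
    \<Rightarrow> ('a \<times> 'a \<Rightarrow> complex) set" where
  "rel2 sc D s t =
     {\<lambda>k. fv [(a + a', b)] k - fv [(a, b)] k - fv [(a', b)] k | a a' b. True} \<union>
     {\<lambda>k. fv [(a, b + b')] k - fv [(a, b)] k - fv [(a, b')] k | a b b'. True} \<union>
     {\<lambda>k. fv [(sc c a, b)] k - c * fv [(a, b)] k | c a b. True} \<union>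
     {\<lambda>k. fv [(a, sc c b)] k - c * fv [(a, b)] k | c a b. True} \<union>
     {\<lambda>k. fv [(s x a, b)] k - fv [(a, t x b)] k | x a b. x \<in> D}"

definition tens_eq :: "(complex \<Rightarrow> 'a::ring \<Rightarrow> 'a) \<Rightarrow> 'b set \<Rightarrow> ('b \<Rightarrow> 'a \<Rightarrow> 'a) \<Rightarrow> ('b \<Rightarrow> 'a \<Rightarrow> 'a)
    \<Rightarrow> ('a \<times> 'a) list \<Rightarrow> ('a \<times> 'a) list \<Rightarrow> bool" where
  "tens_eq sc D s t xs ys \<longleftrightarrow> (\<lambda>k. fv xs k - fv ys k) \<in> cspan (rel2 sc D s t)"

definition rel3 :: "(complex \<Rightarrow> 'a::ring \<Rightarrow> 'a) \<Rightarrow> 'b set \<Rightarrow> ('b \<Rightarrow> 'a \<Rightarrow> 'a) \<Rightarrow> ('b \<Rightarrow> 'a \<Rightarrow> 'a)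
    \<Rightarrow> ('a \<times> 'a \<times> 'a \<Rightarrow> complex) set" where
  "rel3 sc D s t =
     {\<lambda>k. fv [(a + a', b, d)] k - fv [(a, b, d)] k - fv [(a', b, d)] k | a a' b d. True} \<union>
     {\<lambda>k. fv [(a, b + b', d)] k - fv [(a, b, d)] k - fv [(a, b', d)] k | a b b' d. True} \<union>
     {\<lambda>k. fv [(a, b, d + d')] k - fv [(a, b, d)] k - fv [(a, b, d')] k | a b d d'. True} \<union>
     {\<lambda>k. fv [(sc c a, b, d)] k - c * fv [(a, b, d)] k | c a b d. True} \<union>
     {\<lambda>k. fv [(a, sc c b, d)] k - c * fv [(a, b, d)] k | c a b d. True} \<union>
     {\<lambda>k. fv [(a, b, sc c d)] k - c * fv [(a, b, d)] k | c a b d. True} \<union>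
     {\<lambda>k. fv [(s x a, b, d)] k - fv [(a, t x b, d)] k | x a b d. x \<in> D} \<union>
     {\<lambda>k. fv [(a, s x b, d)] k - fv [(a, b, t x d)] k | x a b d. x \<in> D}"

definition tens3_eq :: "(complex \<Rightarrow> 'a::ring \<Rightarrow> 'a) \<Rightarrow> 'b set \<Rightarrow> ('b \<Rightarrow> 'a \<Rightarrow> 'a) \<Rightarrow> ('b \<Rightarrow> 'a \<Rightarrow> 'a)
    \<Rightarrow> ('a \<times> 'a \<times> 'a) list \<Rightarrow> ('a \<times> 'a \<times> 'a) list \<Rightarrow> bool" where
  "tens3_eq sc D s t xs ys \<longleftrightarrow> (\<lambda>k. fv xs k - fv ys k) \<in> cspan (rel3 sc D s t)"

text \<open>Operations on representatives: scalar multiplication, right multiplication by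
  (a (x) 1) and by (1 (x) b), and left multiplication by f (x) g for multipliers f, g.\<close>
definition tscale :: "(complex \<Rightarrow> 'a \<Rightarrow> 'a) \<Rightarrow> complex \<Rightarrow> ('a \<times> 'a) list \<Rightarrow> ('a \<times> 'a) list" where
  "tscale sc c xs = map (\<lambda>(p, q). (sc c p, q)) xs"

definition rm1 :: "'a::ring \<Rightarrow> ('a \<times> 'a) list \<Rightarrow> ('a \<times> 'a) list" where
  "rm1 a xs = map (\<lambda>(p, q). (p * a, q)) xs"

definition rm2 :: "'a::ring \<Rightarrow> ('a \<times> 'a) list \<Rightarrow> ('a \<times> 'a) list" where
  "rm2 b xs = map (\<lambda>(p, q). (p, q * b)) xs"

definition lm :: "('a \<Rightarrow> 'a) \<Rightarrow> ('a \<Rightarrow> 'a) \<Rightarrow> ('a \<times> 'a) list \<Rightarrow> ('a \<times> 'a) list" where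
  "lm f g xs = map (\<lambda>(p, q). (f p, g q)) xs"

text \<open>Linear endomorphisms of _D A (x) A^D, represented by maps on representatives
  compatible with the quotient.\<close>
definition tendo :: "(complex \<Rightarrow> 'a::ring \<Rightarrow> 'a) \<Rightarrow> 'b set \<Rightarrow> ('b \<Rightarrow> 'a \<Rightarrow> 'a) \<Rightarrow> ('b \<Rightarrow> 'a \<Rightarrow> 'a)
    \<Rightarrow> (('a \<times> 'a) list \<Rightarrow> ('a \<times> 'a) list) \<Rightarrow> bool" where
  "tendo sc D s t T \<longleftrightarrow>
     (\<forall>xs ys. tens_eq sc D s t xs ys \<longrightarrow> tens_eq sc D s t (T xs) (T ys)) \<and>
     (\<forall>xs ys. tens_eq sc D s t (T (xs @ ys)) (T xs @ T ys)) \<and>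
     (\<forall>c xs. tens_eq sc D s t (T (tscale sc c xs)) (tscale sc c (T xs)))"

text \<open>X represents T(a (x) 1), i.e. T(a (x) b) = X (1 (x) b) for all b.\<close>
definition rep_left :: "(complex \<Rightarrow> 'a::ring \<Rightarrow> 'a) \<Rightarrow> 'b set \<Rightarrow> ('b \<Rightarrow> 'a \<Rightarrow> 'a) \<Rightarrow> ('b \<Rightarrow> 'a \<Rightarrow> 'a)
    \<Rightarrow> (('a \<times> 'a) list \<Rightarrow> ('a \<times> 'a) list) \<Rightarrow> 'a \<Rightarrow> ('a \<times> 'a) list \<Rightarrow> bool" where
  "rep_left sc D s t T a X \<longleftrightarrow> (\<forall>b. tens_eq sc D s t (T [(a, b)]) (rm2 b X))"

text \<open>Y represents T(1 (x) b), i.e. T(a (x) b) = Y (a (x) 1) for all a.\<close>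
definition rep_right :: "(complex \<Rightarrow> 'a::ring \<Rightarrow> 'a) \<Rightarrow> 'b set \<Rightarrow> ('b \<Rightarrow> 'a \<Rightarrow> 'a) \<Rightarrow> ('b \<Rightarrow> 'a \<Rightarrow> 'a)
    \<Rightarrow> (('a \<times> 'a) list \<Rightarrow> ('a \<times> 'a) list) \<Rightarrow> 'a \<Rightarrow> ('a \<times> 'a) list \<Rightarrow> bool" where
  "rep_right sc D s t T b Y \<longleftrightarrow> (\<forall>a. tens_eq sc D s t (T [(a, b)]) (rm1 a Y))"

definition takeuchi :: "(complex \<Rightarrow> 'a::ring \<Rightarrow> 'a) \<Rightarrow> 'b set \<Rightarrow> ('b \<Rightarrow> 'a \<Rightarrow> 'a) \<Rightarrow> ('b \<Rightarrow> 'a \<Rightarrow> 'a)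
    \<Rightarrow> (('a \<times> 'a) list \<Rightarrow> ('a \<times> 'a) list) \<Rightarrow> bool" where
  "takeuchi sc D s t T \<longleftrightarrow> tendo sc D s t T \<and>
     (\<forall>a. \<exists>X. rep_left sc D s t T a X) \<and> (\<forall>b. \<exists>Y. rep_right sc D s t T b Y)"

definition teq :: "(complex \<Rightarrow> 'a::ring \<Rightarrow> 'a) \<Rightarrow> 'b set \<Rightarrow> ('b \<Rightarrow> 'a \<Rightarrow> 'a) \<Rightarrow> ('b \<Rightarrow> 'a \<Rightarrow> 'a)
    \<Rightarrow> (('a \<times> 'a) list \<Rightarrow> ('a \<times> 'a) list) \<Rightarrow> (('a \<times> 'a) list \<Rightarrow> ('a \<times> 'a) list) \<Rightarrow> bool" where
  "teq sc D s t T T' \<longleftrightarrow> (\<forall>xs. tens_eq sc D s t (T xs) (T' xs))"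

definition left_mult_bialgebroid ::
  "(complex \<Rightarrow> 'a::ring \<Rightarrow> 'a) \<Rightarrow> (complex \<Rightarrow> 'b::ring \<Rightarrow> 'b) \<Rightarrow> 'b set
   \<Rightarrow> ('b \<Rightarrow> 'a \<Rightarrow> 'a) \<Rightarrow> ('b \<Rightarrow> 'a \<Rightarrow> 'a) \<Rightarrow> ('a \<Rightarrow> ('a \<times> 'a) list \<Rightarrow> ('a \<times> 'a) list) \<Rightarrow> bool" where
  "left_mult_bialgebroid scA scB D s t \<Delta> \<longleftrightarrow>
     \<comment> \<open>(i)\<close>
     calg scA \<and> calg scB \<and> subalg scB D \<and>
     right_nondeg TYPE('a) \<and> idempotent_alg TYPE('a) \<and>
     \<comment> \<open>(ii)\<close>
     (\<forall>x\<in>D. inM scA (s x) \<and> inM scA (t x)) \<and>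
     (\<forall>x\<in>D. \<forall>y\<in>D. s (x * y) = s x \<circ> s y \<and> s (x + y) = (\<lambda>a. s x a + s y a)) \<and>
     (\<forall>x\<in>D. \<forall>c. s (scB c x) = (\<lambda>a. scA c (s x a))) \<and>
     (\<forall>x\<in>D. \<forall>y\<in>D. t (x * y) = t y \<circ> t x \<and> t (x + y) = (\<lambda>a. t x a + t y a)) \<and>
     (\<forall>x\<in>D. \<forall>c. t (scB c x) = (\<lambda>a. scA c (t x a))) \<and>
     (\<forall>x\<in>D. \<forall>y\<in>D. s x \<circ> t y = t y \<circ> s x) \<and>
     inj_on s D \<and> inj_on t D \<and> gen_by D s \<and> gen_by D t \<and>
     (\<forall>X. (\<forall>a. tens_eq scA D s t (rm1 a X) []) \<longrightarrow> tens_eq scA D s t X []) \<and>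
     (\<forall>X. (\<forall>a. tens_eq scA D s t (rm2 a X) []) \<longrightarrow> tens_eq scA D s t X []) \<and>
     \<comment> \<open>(iii)\<close>
     (\<forall>a. takeuchi scA D s t (\<Delta> a)) \<and>
     (\<forall>a b. teq scA D s t (\<Delta> (a * b)) (\<Delta> a \<circ> \<Delta> b)) \<and>
     (\<forall>a b. teq scA D s t (\<Delta> (a + b)) (\<lambda>xs. \<Delta> a xs @ \<Delta> b xs)) \<and>
     (\<forall>c a. teq scA D s t (\<Delta> (scA c a)) (\<lambda>xs. tscale scA c (\<Delta> a xs))) \<and>
     \<comment> \<open>(iv)\<close>
     (\<forall>x\<in>D. \<forall>y\<in>D. \<forall>x'\<in>D. \<forall>y'\<in>D. \<forall>a.
        teq scA D s t (\<Delta> (rmul (s x (t y a)) (s x' \<circ> t y')))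
          (\<lambda>xs. lm (t y) (s x) (\<Delta> a (lm (t y') (s x') xs)))) \<and>
     \<comment> \<open>(v)\<close>
     (\<forall>a b c ps us fs gs.
        rep_right scA D s t (\<Delta> b) c ps \<and> rep_left scA D s t (\<Delta> b) a us \<and>
        length fs = length ps \<and> (\<forall>i<length ps. rep_left scA D s t (\<Delta> (fst (ps ! i))) a (fs ! i)) \<and>
        length gs = length us \<and> (\<forall>j<length us. rep_right scA D s t (\<Delta> (snd (us ! j))) c (gs ! j))
        \<longrightarrow> tens3_eq scA D s t
              (concat (map2 (\<lambda>(p, q) f. map (\<lambda>(x, y). (x, y, q)) f) ps fs))
              (concat (map2 (\<lambda>(u, v) g. map (\<lambda>(x, y). (u, x, y)) g) us gs)))"

text \<open>Left counits. T_rho(a (x) b) = Delta(a)(1 (x) b), T_lambda(a (x) b) = Delta(b)(a (x) 1).\<close>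
definition left_counit ::
  "(complex \<Rightarrow> 'a::ring \<Rightarrow> 'a) \<Rightarrow> (complex \<Rightarrow> 'b::ring \<Rightarrow> 'b) \<Rightarrow> 'b set
   \<Rightarrow> ('b \<Rightarrow> 'a \<Rightarrow> 'a) \<Rightarrow> ('b \<Rightarrow> 'a \<Rightarrow> 'a) \<Rightarrow> ('a \<Rightarrow> ('a \<times> 'a) list \<Rightarrow> ('a \<times> 'a) list)
   \<Rightarrow> ('a \<Rightarrow> 'b) \<Rightarrow> bool" where
  "left_counit scA scB D s t \<Delta> \<epsilon> \<longleftrightarrow>
     (\<forall>a. \<epsilon> a \<in> D) \<and>
     (\<forall>a b. \<epsilon> (a + b) = \<epsilon> a + \<epsilon> b) \<and> (\<forall>c a. \<epsilon> (scA c a) = scB c (\<epsilon> a)) \<and>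
     (\<forall>x\<in>D. \<forall>a. \<epsilon> (s x a) = x * \<epsilon> a) \<and>
     (\<forall>y\<in>D. \<forall>a. \<epsilon> (t y a) = \<epsilon> a * y) \<and>
     (\<forall>a b cs. rep_right scA D s t (\<Delta> a) b cs \<longrightarrow>
        sum_list (map (\<lambda>(c, d). t (\<epsilon> c) d) cs) = a * b) \<and>
     (\<forall>a b cs. rep_left scA D s t (\<Delta> b) a cs \<longrightarrow>
        sum_list (map (\<lambda>(c, d). s (\<epsilon> d) c) cs) = b * a)"

end

theory Submission
  imports Defs
begin

lemma cspan_gen: "g \<in> S \<Longrightarrow> g \<in> cspan S"
  unfolding cspan_def by (rule CollectI, rule exI[of _ "[(1,g)]"]) auto

lemma cspan_zero: "(\<lambda>k. 0) \<in> cspan S"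
  unfolding cspan_def by (rule CollectI, rule exI[of _ "[]"]) auto

lemma cspan_add: assumes "f \<in> cspan S" "g \<in> cspan S" shows "(\<lambda>k. f k + g k) \<in> cspan S"
proof -
  obtain lf where lf: "\<forall>g\<in>snd ` set lf. g \<in> S" "f = (\<lambda>k. \<Sum>(c, g)\<leftarrow>lf. c * g k)"
    using assms(1) unfolding cspan_def by blast
  obtain lg where lg: "\<forall>g\<in>snd ` set lg. g \<in> S" "g = (\<lambda>k. \<Sum>(c, g)\<leftarrow>lg. c * g k)"
    using assms(2) unfolding cspan_def by blast
  show ?thesis unfolding cspan_def
    by (rule CollectI, rule exI[of _ "lf @ lg"]) (use lf lg in auto)
qed

lemma sum_scale: "(\<Sum>(d, g)\<leftarrow>map (\<lambda>(d, g). (c * d, g)) l. d * g k) = (c::complex) * (\<Sum>(d, g)\<leftarrow>l. d * (g::'k \<Rightarrow> complex) k)"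
  by (induction l) (auto simp: algebra_simps)

lemma sum_scale2: "sum_list (map ((\<lambda>(c, g). c * g k) \<circ> (\<lambda>(d, y). (c' * d, y))) l) = (c'::complex) * (\<Sum>(c, g)\<leftarrow>l. c * (g::'k \<Rightarrow> complex) k)"
  by (induction l) (auto simp: algebra_simps)

lemma cspan_smult: assumes "f \<in> cspan S" shows "(\<lambda>k. c * f k) \<in> cspan S"
proof -
  obtain lf where lf: "\<forall>g\<in>snd ` set lf. g \<in> S" "f = (\<lambda>k. \<Sum>(c, g)\<leftarrow>lf. c * g k)"
    using assms(1) unfolding cspan_def by blast
  show ?thesis unfolding cspan_def
    by (rule CollectI, rule exI[of _ "map (\<lambda>(d, g). (c * d, g)) lf"]) (use lf in \<open>auto simp: sum_scale2\<close>)
qed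

lemma cspan_sub_aux: assumes "S \<subseteq> cspan T" shows "\<forall>g\<in>snd ` set l. g \<in> S \<Longrightarrow> (\<lambda>k. \<Sum>(c, g)\<leftarrow>l. c * g k) \<in> cspan T"
proof (induction l)
  case Nil then show ?case using cspan_zero by simp
next
  case (Cons p l)
  obtain c g where p: "p = (c, g)" by force
  have "g \<in> cspan T" using Cons.prems p assms by auto
  then have "(\<lambda>k. c * g k) \<in> cspan T" by (rule cspan_smult)
  moreover have "(\<lambda>k. \<Sum>(c, g)\<leftarrow>l. c * g k) \<in> cspan T" using Cons by auto
  ultimately show ?case using cspan_add p by fastforce
qed

lemma cspan_sub: "S \<subseteq> cspan T \<Longrightarrow> cspan S \<subseteq> cspan T"
  using cspan_sub_aux unfolding cspan_def[of S] by blast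

definition eqv :: "('k \<Rightarrow> complex) set \<Rightarrow> ('k \<Rightarrow> complex) \<Rightarrow> ('k \<Rightarrow> complex) \<Rightarrow> bool" where
  "eqv S f g \<longleftrightarrow> (\<lambda>k. f k - g k) \<in> cspan S"

lemma eqv_refl: "eqv S f f" unfolding eqv_def using cspan_zero by simp

lemma eqv_sym: assumes "eqv S f g" shows "eqv S g f"
proof -
  have "(\<lambda>k. (-1) * (f k - g k)) \<in> cspan S" using assms cspan_smult unfolding eqv_def by blast
  then show ?thesis unfolding eqv_def by (simp add: algebra_simps)
qed

lemma eqv_trans: assumes "eqv S f g" "eqv S g h" shows "eqv S f h"
proof -
  have "(\<lambda>k. (f k - g k) + (g k - h k)) \<in> cspan S" using assms cspan_add unfolding eqv_def by blast
  then show ?thesis unfolding eqv_def by (simp add: algebra_simps)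
qed

lemma eqv_add: assumes "eqv S f f'" "eqv S g g'" shows "eqv S (\<lambda>k. f k + g k) (\<lambda>k. f' k + g' k)"
proof -
  have "(\<lambda>k. (f k - f' k) + (g k - g' k)) \<in> cspan S" using assms cspan_add unfolding eqv_def by blast
  then show ?thesis unfolding eqv_def by (simp add: algebra_simps)
qed

lemma eqv_gen2: "(\<lambda>k. f k - g k) \<in> S \<Longrightarrow> eqv S f g"
  unfolding eqv_def by (rule cspan_gen)

lemma eqv_gen3: "(\<lambda>k. f k - g k - h k) \<in> S \<Longrightarrow> eqv S f (\<lambda>k. g k + h k)"
  unfolding eqv_def by (drule cspan_gen) (simp add: diff_diff_eq)

lemma zero_eqv:
  assumes add: "\<And>p p' q. eqv R (fv [P (p+p') q]) (\<lambda>k. fv [P p q] k + fv [P p' q] k)"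
  shows "eqv R (fv [P (0::'a::ring) q]) (\<lambda>k. 0)"
proof -
  have "(\<lambda>k. fv [P 0 q] k - (fv [P 0 q] k + fv [P 0 q] k)) \<in> cspan R"
    using add[of 0 0 q] by (simp add: eqv_def)
  then have "(\<lambda>k. -1 * (fv [P 0 q] k - (fv [P 0 q] k + fv [P 0 q] k))) \<in> cspan R"
    by (rule cspan_smult)
  then show ?thesis by (simp add: eqv_def)
qed

lemma balance_generic:
  fixes P :: "'a::ring \<Rightarrow> 'a \<Rightarrow> 'k" and s t :: "'b::ring \<Rightarrow> 'a \<Rightarrow> 'a"
  assumes add: "\<And>p p' q. eqv R (fv [P (p+p') q]) (\<lambda>k. fv [P p q] k + fv [P p' q] k)"
    and bal: "\<And>y p q. y \<in> B0 \<Longrightarrow> eqv R (fv [P (s y p) q]) (fv [P p (t y q)])"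
    and sadd: "\<And>p p'. s x (p + p') = s x p + s x p'"
    and smul: "\<And>y p. y \<in> B0 \<Longrightarrow> s x (s y p) = s (x*y) p"
    and tmul: "\<And>y q. y \<in> B0 \<Longrightarrow> t (x*y) q = t y (t x q)"
    and ideal: "\<And>y. y \<in> B0 \<Longrightarrow> x*y \<in> B0"
  shows "\<forall>y\<in>fst ` set l. y \<in> B0 \<Longrightarrow>
     eqv R (fv [P (s x (\<Sum>(y,c)\<leftarrow>l. s y c)) q]) (fv [P (\<Sum>(y,c)\<leftarrow>l. s y c) (t x q)])"
proof (induction l)
  case Nil
  have "s x 0 = 0" using sadd[of 0 0] by simp
  then show ?case using zero_eqv[where R=R and P=P, OF add] eqv_sym eqv_trans by fastforce
next
  case (Cons p l)
  obtain y c where p: "p = (y, c)" by force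
  have y: "y \<in> B0" using Cons.prems p by auto
  define S' where "S' = (\<Sum>(y,c)\<leftarrow>l. s y c)"
  have IH: "eqv R (fv [P (s x S') q]) (fv [P S' (t x q)])" using Cons unfolding S'_def by auto
  have e1: "s x (s y c + S') = s (x*y) c + s x S'" using sadd smul y by simp
  have "eqv R (fv [P (s (x*y) c + s x S') q]) (\<lambda>k. fv [P (s (x*y) c) q] k + fv [P (s x S') q] k)"
    by (rule add)
  moreover have "eqv R (\<lambda>k. fv [P (s (x*y) c) q] k + fv [P (s x S') q] k)
       (\<lambda>k. fv [P c (t (x*y) q)] k + fv [P S' (t x q)] k)"
    by (rule eqv_add[OF bal[OF ideal[OF y]] IH])
  moreover have "eqv R (\<lambda>k. fv [P c (t (x*y) q)] k + fv [P S' (t x q)] k)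
       (\<lambda>k. fv [P (s y c) (t x q)] k + fv [P S' (t x q)] k)"
    unfolding tmul[OF y] by (rule eqv_add[OF eqv_sym[OF bal[OF y]] eqv_refl])
  moreover have "eqv R (\<lambda>k. fv [P (s y c) (t x q)] k + fv [P S' (t x q)] k) (fv [P (s y c + S') (t x q)])"
    by (rule eqv_sym[OF add])
  ultimately have "eqv R (fv [P (s x (s y c + S')) q]) (fv [P (s y c + S') (t x q)])"
    unfolding e1 using eqv_trans by blast
  then show ?case by (simp add: p S'_def)
qed

theorem lemma3p7:
  fixes scA :: "complex \<Rightarrow> 'a::ring \<Rightarrow> 'a" and scB :: "complex \<Rightarrow> 'b::ring \<Rightarrow> 'b"
    and s t :: "'b \<Rightarrow> 'a \<Rightarrow> 'a" and \<Delta> :: "'a \<Rightarrow> ('a \<times> 'a) list \<Rightarrow> ('a \<times> 'a) list"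
    and B0 :: "'b set"
  assumes "left_mult_bialgebroid scA scB UNIV s t \<Delta>"
    and "two_sided_ideal scB B0"
    and "gen_by B0 s" and "gen_by B0 t"
  shows "(\<forall>xs ys. tens_eq scA B0 s t xs ys \<longleftrightarrow> tens_eq scA UNIV s t xs ys)
    \<and> left_mult_bialgebroid scA scB B0 s t \<Delta>
    \<and> (\<forall>\<epsilon>. left_counit scA scB UNIV s t \<Delta> \<epsilon> \<longrightarrow>
          range \<epsilon> \<subseteq> B0 \<and> left_counit scA scB B0 s t \<Delta> \<epsilon>)"
proof -
  have inM: "\<And>x. inM scA (s x)" and smul: "\<And>x y. s (x*y) = s x \<circ> s y"
    and tmul: "\<And>x y. t (x*y) = t y \<circ> t x"
    using assms(1) unfolding left_mult_bialgebroid_def by auto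
  have sadd: "\<And>x p p'. s x (p + p') = s x p + s x p'"
    using inM unfolding inM_def inL_def by blast
  have ideal: "\<And>x y. y \<in> B0 \<Longrightarrow> x * y \<in> B0" and ideal2: "\<And>x y. x \<in> B0 \<Longrightarrow> x * y \<in> B0"
    and iadd: "\<And>x y. x \<in> B0 \<Longrightarrow> y \<in> B0 \<Longrightarrow> x + y \<in> B0" and i0: "0 \<in> B0"
    and isc: "\<And>x c. x \<in> B0 \<Longrightarrow> scB c x \<in> B0"
    using assms(2) unfolding two_sided_ideal_def by auto
  have genl: "\<exists>l. (\<forall>y\<in>fst ` set l. y \<in> B0) \<and> a = (\<Sum>(y,c)\<leftarrow>l. s y c)" for a
    using assms(3) unfolding gen_by_def by blast
  have key2: "eqv (rel2 scA B0 s t) (fv [(s x a, b)]) (fv [(a, t x b)])" for x a b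
  proof -
    obtain l where l: "\<forall>y\<in>fst ` set l. y \<in> B0" "a = (\<Sum>(y,c)\<leftarrow>l. s y c)" using genl by blast
    show ?thesis unfolding l(2)
    proof (rule balance_generic[where P=Pair, OF _ _ sadd _ _ ideal l(1)])
      show "eqv (rel2 scA B0 s t) (fv [(p + p', q)]) (\<lambda>k. fv [(p, q)] k + fv [(p', q)] k)" for p p' q
        by (rule eqv_gen3) (unfold rel2_def, blast)
      show "eqv (rel2 scA B0 s t) (fv [(s y p, q)]) (fv [(p, t y q)])" if "y \<in> B0" for y p q
        by (rule eqv_gen2) (unfold rel2_def, use that in blast)
      show "s x (s y p) = s (x * y) p" for y p using smul by simp
      show "t (x * y) q = t y (t x q)" for y q using tmul by simp
    qed
  qed
  have key3a: "eqv (rel3 scA B0 s t) (fv [(s x a, b, d)]) (fv [(a, t x b, d)])" for x a b d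
  proof -
    obtain l where l: "\<forall>y\<in>fst ` set l. y \<in> B0" "a = (\<Sum>(y,c)\<leftarrow>l. s y c)" using genl by blast
    show ?thesis unfolding l(2)
    proof (rule balance_generic[where P="\<lambda>p q. (p, q, d)", OF _ _ sadd _ _ ideal l(1)])
      show "eqv (rel3 scA B0 s t) (fv [(p + p', q, d)]) (\<lambda>k. fv [(p, q, d)] k + fv [(p', q, d)] k)" for p p' q
        by (rule eqv_gen3) (unfold rel3_def Un_iff mem_Collect_eq, intro disjI1, blast)
      show "eqv (rel3 scA B0 s t) (fv [(s y p, q, d)]) (fv [(p, t y q, d)])" if "y \<in> B0" for y p q
        by (rule eqv_gen2) (unfold rel3_def Un_iff mem_Collect_eq, rule disjI1, rule disjI2, use that in blast)
      show "s x (s y p) = s (x * y) p" for y p using smul by simp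
      show "t (x * y) q = t y (t x q)" for y q using tmul by simp
    qed
  qed
  have key3b: "eqv (rel3 scA B0 s t) (fv [(a, s x b, d)]) (fv [(a, b, t x d)])" for x a b d
  proof -
    obtain l where l: "\<forall>y\<in>fst ` set l. y \<in> B0" "b = (\<Sum>(y,c)\<leftarrow>l. s y c)" using genl by blast
    show ?thesis unfolding l(2)
    proof (rule balance_generic[where P="\<lambda>p q. (a, p, q)", OF _ _ sadd _ _ ideal l(1)])
      show "eqv (rel3 scA B0 s t) (fv [(a, p + p', q)]) (\<lambda>k. fv [(a, p, q)] k + fv [(a, p', q)] k)" for p p' q
        by (rule eqv_gen3) (unfold rel3_def Un_iff mem_Collect_eq, rule disjI1, rule disjI1, rule disjI1, rule disjI1, rule disjI1, rule disjI1, rule disjI2, blast)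
      show "eqv (rel3 scA B0 s t) (fv [(a, s y p, q)]) (fv [(a, p, t y q)])" if "y \<in> B0" for y p q
        by (rule eqv_gen2) (unfold rel3_def Un_iff mem_Collect_eq, rule disjI2, use that in blast)
      show "s x (s y p) = s (x * y) p" for y p using smul by simp
      show "t (x * y) q = t y (t x q)" for y q using tmul by simp
    qed
  qed
  have C2: "cspan (rel2 scA B0 s t) = cspan (rel2 scA UNIV s t)"
  proof
    have "rel2 scA B0 s t \<subseteq> rel2 scA UNIV s t" unfolding rel2_def by blast
    then have "rel2 scA B0 s t \<subseteq> cspan (rel2 scA UNIV s t)" using cspan_gen by blast
    then show "cspan (rel2 scA B0 s t) \<subseteq> cspan (rel2 scA UNIV s t)" by (rule cspan_sub)
    have "rel2 scA UNIV s t \<subseteq> cspan (rel2 scA B0 s t)"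
    proof
      fix h assume "h \<in> rel2 scA UNIV s t"
      then have "h \<in> rel2 scA B0 s t \<or> (\<exists>x a b. h = (\<lambda>k. fv [(s x a, b)] k - fv [(a, t x b)] k))"
        unfolding rel2_def by blast
      then show "h \<in> cspan (rel2 scA B0 s t)"
      proof (elim disjE exE)
        show "h \<in> rel2 scA B0 s t \<Longrightarrow> h \<in> cspan (rel2 scA B0 s t)" by (rule cspan_gen)
        fix x a b assume "h = (\<lambda>k. fv [(s x a, b)] k - fv [(a, t x b)] k)"
        then show "h \<in> cspan (rel2 scA B0 s t)" using key2[of x a b] unfolding eqv_def by simp
      qed
    qed
    then show "cspan (rel2 scA UNIV s t) \<subseteq> cspan (rel2 scA B0 s t)" by (rule cspan_sub)
  qed
  have C3: "cspan (rel3 scA B0 s t) = cspan (rel3 scA UNIV s t)"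
  proof
    have "rel3 scA B0 s t \<subseteq> rel3 scA UNIV s t" unfolding rel3_def by blast
    then have "rel3 scA B0 s t \<subseteq> cspan (rel3 scA UNIV s t)" using cspan_gen by blast
    then show "cspan (rel3 scA B0 s t) \<subseteq> cspan (rel3 scA UNIV s t)" by (rule cspan_sub)
    have "rel3 scA UNIV s t \<subseteq> cspan (rel3 scA B0 s t)"
    proof
      fix h assume "h \<in> rel3 scA UNIV s t"
      then have "h \<in> rel3 scA B0 s t \<or> (\<exists>x a b d. h = (\<lambda>k. fv [(s x a, b, d)] k - fv [(a, t x b, d)] k))
         \<or> (\<exists>x a b d. h = (\<lambda>k. fv [(a, s x b, d)] k - fv [(a, b, t x d)] k))"
        unfolding rel3_def by blast
      then show "h \<in> cspan (rel3 scA B0 s t)"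
      proof (elim disjE exE)
        show "h \<in> rel3 scA B0 s t \<Longrightarrow> h \<in> cspan (rel3 scA B0 s t)" by (rule cspan_gen)
        fix x a b d assume "h = (\<lambda>k. fv [(s x a, b, d)] k - fv [(a, t x b, d)] k)"
        then show "h \<in> cspan (rel3 scA B0 s t)" using key3a[of x a b d] unfolding eqv_def by simp
      next
        fix x a b d assume "h = (\<lambda>k. fv [(a, s x b, d)] k - fv [(a, b, t x d)] k)"
        then show "h \<in> cspan (rel3 scA B0 s t)" using key3b[of a x b d] unfolding eqv_def by simp
      qed
    qed
    then show "cspan (rel3 scA UNIV s t) \<subseteq> cspan (rel3 scA B0 s t)" by (rule cspan_sub)
  qed
  have TE: "tens_eq scA B0 s t = tens_eq scA UNIV s t"
    by (intro ext) (simp add: tens_eq_def C2)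
  have T3: "tens3_eq scA B0 s t = tens3_eq scA UNIV s t"
    by (intro ext) (simp add: tens3_eq_def C3)
  have RL: "rep_left scA B0 s t = rep_left scA UNIV s t"
    by (intro ext) (simp add: rep_left_def TE)
  have RR: "rep_right scA B0 s t = rep_right scA UNIV s t"
    by (intro ext) (simp add: rep_right_def TE)
  have TD: "tendo scA B0 s t = tendo scA UNIV s t"
    by (intro ext) (simp add: tendo_def TE)
  have TK: "takeuchi scA B0 s t = takeuchi scA UNIV s t"
    by (intro ext) (simp add: takeuchi_def TD RL RR)
  have TQ: "teq scA B0 s t = teq scA UNIV s t"
    by (intro ext) (simp add: teq_def TE)
  have sub: "subalg scB B0" unfolding subalg_def using i0 iadd ideal isc by blast
  have P2: "left_mult_bialgebroid scA scB B0 s t \<Delta>"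
    using assms(1) unfolding left_mult_bialgebroid_def TE T3 RL RR TK TQ
    apply (elim conjE)
    apply (intro conjI)
    apply (assumption | rule sub assms(3) assms(4) | blast intro: inj_on_subset | fast)+
    done
  have P3: "range \<epsilon> \<subseteq> B0 \<and> left_counit scA scB B0 s t \<Delta> \<epsilon>"
    if C: "left_counit scA scB UNIV s t \<Delta> \<epsilon>" for \<epsilon>
  proof -
    have eadd: "\<And>a b. \<epsilon> (a + b) = \<epsilon> a + \<epsilon> b" and es: "\<And>x a. \<epsilon> (s x a) = x * \<epsilon> a"
      using C unfolding left_counit_def by auto
    have e0: "\<epsilon> 0 = 0" using eadd[of 0 0] by simp
    have sumB0: "\<forall>y\<in>fst ` set l. y \<in> B0 \<Longrightarrow> \<epsilon> (\<Sum>(y,c)\<leftarrow>l. s y c) \<in> B0" for l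
    proof (induction l)
      case Nil then show ?case using e0 i0 by simp
    next
      case (Cons p l)
      obtain y c where p: "p = (y, c)" by force
      have "y \<in> B0" using Cons.prems p by auto
      then have "y * \<epsilon> c \<in> B0" by (rule ideal2)
      moreover have "\<epsilon> (\<Sum>(y,c)\<leftarrow>l. s y c) \<in> B0" using Cons by auto
      ultimately show ?case using p eadd es iadd by simp
    qed
    have R: "range \<epsilon> \<subseteq> B0"
    proof
      fix z assume "z \<in> range \<epsilon>"
      then obtain a where a: "z = \<epsilon> a" by blast
      obtain l where l: "\<forall>y\<in>fst ` set l. y \<in> B0" "a = (\<Sum>(y,c)\<leftarrow>l. s y c)" using genl by blast
      show "z \<in> B0" using sumB0[OF l(1)] a l(2) by simp
    qed
    moreover have "left_counit scA scB B0 s t \<Delta> \<epsilon>"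
      using C R unfolding left_counit_def RL RR by auto
    ultimately show ?thesis by blast
  qed
  show ?thesis using TE P2 P3 by simp
qed

end
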